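(* With the notation of the context, there is a surjective quandle homomorphism $\tilde R_{2n+1} \to R_{2n+1}$.
   Context: A quandle is a set $X$ with a binary operation $\triangleleft$ such that (I) $a \triangleleft a = a$; (II) for all $a,b$ there is a unique $c$ with $a = c\triangleleft b$; (III) $(a\triangleleft b)\triangleleft c = (a\triangleleft c)\triangleleft(b \triangleleft c)$; a quandle homomorphism $f$ satisfies $f(a\triangleleft b)=f(a)\triangleleft f(b)$. Fix $n\ge1$, $m=2n+1$. For a permutation $\sigma$ of $\{1,\dots,m\}$ and signs $\epsilon_i\in\{\pm1\}$, write $(\epsilon_1\sigma(1),\dots,\epsilon_m\sigma(m))$ for the $m\times m$ signed permutation matrix whose $i$-th column is $\epsilon_i e_{\sigma(i)}$, $e_j$ the standard basis column vectors. Let $a = (1, 2n+1, 2n, \ldots, n+2, -(n+1), \ldots, -3, -2)$ (column $1$ is $e_1$, column $i$ is $e_{2n+3-i}$ for $2\le i\le n+1$, column $i$ is $-e_{2n+3-i}$ for $n+2\le i\le 2n+1$) and $b = (2n+1, 1, 2, \ldots, 2n)$ (column $1$ is $e_{2n+1}$, column $i$ is $e_{i-1}$ for $i\ge2$). Let $G_{2n+1}$ be the matrix group generated by $a$ and $b$, let $H = C(a) = \{c\in G_{2n+1} : ac = ca\}$, and let $\tilde R_{2n+1}$ be the set of right cosets $Hu$ ($u\in G_{2n+1}$) with quandle operation $Hu \triangleleft Hv = H\,uv^{-1}av$. $R_{2n+1}$ is the dihedral quandle on $\{0,1,\dots,2n\}$ with $i\triangleleft j \equiv 2j - i \pmod{2n+1}$.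 *)

theory Defs
  imports "Jordan_Normal_Form.Matrix"
begin

text \<open>Matrices are m x m integer matrices, m = 2n+1. Entries are described with
  1-based indices (row r, column c) as in the paper and shifted to the 0-based
  indexing of Jordan_Normal_Form.\<close>

definition msize :: "nat \<Rightarrow> nat" where
  "msize n = 2 * n + 1"

definition signed_perm_mat :: "nat \<Rightarrow> (nat \<Rightarrow> nat) \<Rightarrow> (nat \<Rightarrow> int) \<Rightarrow> int mat" where
  "signed_perm_mat m \<sigma> \<epsilon> = mat m m (\<lambda>(i, j). if i + 1 = \<sigma> (j + 1) then \<epsilon> (j + 1) else 0)"

text \<open>a = (1, 2n+1, 2n, ..., n+2, -(n+1), ..., -3, -2).\<close>
definition mat_a :: "nat \<Rightarrow> int mat" where
  "mat_a n = signed_perm_mat (2 * n + 1)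
     (\<lambda>c. if c = 1 then 1 else 2 * n + 3 - c)
     (\<lambda>c. if c \<le> n + 1 then 1 else -1)"

definition mat_b :: "nat \<Rightarrow> int mat" where
  "mat_b n = signed_perm_mat (2 * n + 1)
     (\<lambda>c. if c = 1 then 2 * n + 1 else c - 1)
     (\<lambda>c. 1)"

inductive_set Ggen :: "nat \<Rightarrow> int mat set" for n :: nat where
  gen_one: "1\<^sub>m (2 * n + 1) \<in> Ggen n"
| gen_a: "mat_a n \<in> Ggen n"
| gen_b: "mat_b n \<in> Ggen n"
| gen_mult: "x \<in> Ggen n \<Longrightarrow> y \<in> Ggen n \<Longrightarrow> x * y \<in> Ggen n"
| gen_inv: "x \<in> Ggen n \<Longrightarrow> y \<in> carrier_mat (2 * n + 1) (2 * n + 1) \<Longrightarrow>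
            x * y = 1\<^sub>m (2 * n + 1) \<Longrightarrow> y * x = 1\<^sub>m (2 * n + 1) \<Longrightarrow> y \<in> Ggen n"

definition Hcent :: "nat \<Rightarrow> int mat set" where
  "Hcent n = {c \<in> Ggen n. mat_a n * c = c * mat_a n}"

definition rcoset :: "nat \<Rightarrow> int mat \<Rightarrow> int mat set" where
  "rcoset n u = {h * u | h. h \<in> Hcent n}"

definition Rtilde :: "nat \<Rightarrow> int mat set set" where
  "Rtilde n = rcoset n ` Ggen n"

definition dihedral_op :: "nat \<Rightarrow> int \<Rightarrow> int \<Rightarrow> int" where
  "dihedral_op n i j = (2 * j - i) mod int (2 * n + 1)"

definition R_dihedral :: "nat \<Rightarrow> int set" where
  "R_dihedral n = {0 .. int (2 * n)}"

end

theory Submission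
  imports Defs
begin

definition SP :: "nat \<Rightarrow> int \<Rightarrow> int \<Rightarrow> (nat \<Rightarrow> int) \<Rightarrow> int mat" where
  "SP n s c e = mat (2*n+1) (2*n+1) (\<lambda>(i,j). if int i = (s * int j + c) mod int (2*n+1) then e j else 0)"

lemma SP_carrier[simp]: "SP n s c e \<in> carrier_mat (2*n+1) (2*n+1)"
  "dim_row (SP n s c e) = 2*n+1" "dim_col (SP n s c e) = 2*n+1"
  by (auto simp: SP_def)

lemma SP_index: "i < 2*n+1 \<Longrightarrow> j < 2*n+1 \<Longrightarrow>
  SP n s c e $$ (i,j) = (if int i = (s * int j + c) mod int (2*n+1) then e j else 0)"
  by (simp add: SP_def)

lemma SP_index': "i < 2*n+1 \<Longrightarrow> j < 2*n+1 \<Longrightarrow>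
  SP n s c e $$ (i,j) = (if i = nat ((s * int j + c) mod int (2*n+1)) then e j else 0)"
proof -
  have "0 \<le> (s * int j + c) mod int (2*n+1)" by simp
  then have "(int i = (s * int j + c) mod int (2*n+1)) = (i = nat ((s * int j + c) mod int (2*n+1)))"
    by auto
  then show "i < 2*n+1 \<Longrightarrow> j < 2*n+1 \<Longrightarrow> ?thesis" by (simp add: SP_index)
qed

lemma nat_mod_lt[simp]: "nat (x mod int (2*n+1)) < 2*n+1"
proof -
  have "x mod int (2*n+1) < int (2*n+1)" by simp
  then show ?thesis by linarith
qed

lemma SP_mult: "SP n s1 c1 e1 * SP n s2 c2 e2 =
   SP n (s1*s2) (s1*c2+c1) (\<lambda>k. e1 (nat ((s2*int k + c2) mod int (2*n+1))) * e2 k)"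
proof (rule eq_matI)
  fix i k assume i: "i < dim_row (SP n (s1*s2) (s1*c2+c1) (\<lambda>k. e1 (nat ((s2*int k + c2) mod int (2*n+1))) * e2 k))"
    and k: "k < dim_col (SP n (s1*s2) (s1*c2+c1) (\<lambda>k. e1 (nat ((s2*int k + c2) mod int (2*n+1))) * e2 k))"
  define j0 where "j0 = nat ((s2*int k + c2) mod int (2*n+1))"
  have i': "i < 2*n+1" and k': "k < 2*n+1" using i k by auto
  have j0: "j0 < 2*n+1" unfolding j0_def
    by (rule nat_mod_lt)
  have ij0: "int j0 = (s2*int k + c2) mod int (2*n+1)" unfolding j0_def by simp
  have "(SP n s1 c1 e1 * SP n s2 c2 e2) $$ (i,k) = (\<Sum>j<2*n+1. SP n s1 c1 e1 $$ (i,j) * SP n s2 c2 e2 $$ (j,k))"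
    using i' k' by (simp add: scalar_prod_def lessThan_atLeast0)
  also have "\<dots> = (\<Sum>j<2*n+1. if j = j0 then SP n s1 c1 e1 $$ (i,j) * e2 k else 0)"
  proof (rule sum.cong)
    fix j assume "j \<in> {..<2*n+1}"
    then have "j < 2*n+1" by simp
    then show "SP n s1 c1 e1 $$ (i,j) * SP n s2 c2 e2 $$ (j,k) = (if j = j0 then SP n s1 c1 e1 $$ (i,j) * e2 k else 0)"
      unfolding SP_index'[OF \<open>j < 2*n+1\<close> k'] j0_def by simp
  qed simp
  also have "\<dots> = SP n s1 c1 e1 $$ (i,j0) * e2 k" using j0 by simp
  also have "\<dots> = (if int i = (s1 * int j0 + c1) mod int (2*n+1) then e1 j0 * e2 k else 0)"
    using i' j0 by (simp add: SP_index)
  also have "(s1 * int j0 + c1) mod int (2*n+1) = (s1*s2 * int k + (s1*c2+c1)) mod int (2*n+1)"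
  proof -
    have "(s1 * ((s2*int k + c2) mod int (2*n+1)) + c1) mod int (2*n+1) = (s1 * (s2*int k + c2) + c1) mod int (2*n+1)"
      by (rule mod_add_cong[OF mod_mult_right_eq refl])
    then show ?thesis unfolding ij0 by (simp add: algebra_simps)
  qed
  finally show "(SP n s1 c1 e1 * SP n s2 c2 e2) $$ (i,k) = SP n (s1*s2) (s1*c2+c1) (\<lambda>k. e1 (nat ((s2*int k + c2) mod int (2*n+1))) * e2 k) $$ (i,k)"
    using i' k' by (simp add: SP_index j0_def)
qed auto

lemma neg_mod_m: "1 \<le> j \<Longrightarrow> j < m \<Longrightarrow> (- int j) mod int m = int m - int j"
proof -
  assume a: "1 \<le> j" "j < m"
  have "(- int j) mod int m = (int m - int j) mod int m"
    by (metis add.commute diff_conv_add_uminus mod_add_self2)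
  also have "\<dots> = int m - int j" using a by (intro mod_pos_pos_trivial) auto
  finally show ?thesis .
qed

lemma mat_a_SP: "mat_a n = SP n (-1) 0 (\<lambda>j. if j \<le> n then 1 else -1)"
proof (rule eq_matI)
  fix i j assume i: "i < dim_row (SP n (-1) 0 (\<lambda>j. if j \<le> n then 1 else -1))"
    and j: "j < dim_col (SP n (-1) 0 (\<lambda>j. if j \<le> n then 1 else -1))"
  then have i': "i < 2*n+1" and j': "j < 2*n+1" by auto
  have eq: "(i + 1 = (if j + 1 = 1 then 1 else 2 * n + 3 - (j + 1))) = (int i = (- int j) mod int (2*n+1))"
  proof (cases "j = 0")
    case True then show ?thesis by auto
  next
    case False
    then have "(- int j) mod int (2*n+1) = int (2*n+1) - int j" using j' by (intro neg_mod_m) auto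
    then show ?thesis using False j' by auto
  qed
  show "mat_a n $$ (i, j) = SP n (-1) 0 (\<lambda>j. if j \<le> n then 1 else -1) $$ (i, j)"
    using i' j' unfolding SP_index[OF i' j'] mat_a_def signed_perm_mat_def
    by (simp only: index_mat split eq) simp
qed (auto simp: mat_a_def signed_perm_mat_def)

lemma mat_b_SP: assumes n1: "n \<ge> 1" shows "mat_b n = SP n 1 (-1) (\<lambda>j. 1)"
proof (rule eq_matI)
  fix i j assume i: "i < dim_row (SP n 1 (-1) (\<lambda>j. 1))"
    and j: "j < dim_col (SP n 1 (-1) (\<lambda>j. 1))"
  then have i': "i < 2*n+1" and j': "j < 2*n+1" by auto
  have eq: "(i + 1 = (if j + 1 = 1 then 2 * n + 1 else j + 1 - 1)) = (int i = (1 * int j + - 1) mod int (2*n+1))"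
  proof (cases "j = 0")
    case True
    have "(- int 1) mod int (2*n+1) = int (2*n+1) - int 1" using n1 by (intro neg_mod_m) auto
    then show ?thesis using True by auto
  next
    case False
    then have "(int j - 1) mod int (2*n+1) = int j - 1" using j' by (intro mod_pos_pos_trivial) auto
    then show ?thesis using False j' by auto
  qed
  show "mat_b n $$ (i, j) = SP n 1 (-1) (\<lambda>j. 1) $$ (i, j)"
    using i' j' unfolding SP_index[OF i' j'] mat_b_def signed_perm_mat_def
    by (simp only: index_mat split eq)
qed (auto simp: mat_b_def signed_perm_mat_def)

lemma SP_cong: "(\<And>k. k < 2*n+1 \<Longrightarrow> e k = e' k) \<Longrightarrow> s = s' \<Longrightarrow> c mod int (2*n+1) = c' mod int (2*n+1)
   \<Longrightarrow> SP n s c e = SP n s' c' e'"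
  by (rule eq_matI) (auto simp: SP_index mod_add_right_eq[where b = c, symmetric] mod_add_right_eq[where b = c', symmetric])

lemma SP_one: "(\<And>k. k < 2*n+1 \<Longrightarrow> e k = 1) \<Longrightarrow> c mod int (2*n+1) = 0 \<Longrightarrow> SP n 1 c e = 1\<^sub>m (2*n+1)"
proof (rule eq_matI)
  fix i j assume e: "\<And>k. k < 2*n+1 \<Longrightarrow> e k = 1" and c: "c mod int (2*n+1) = 0"
    and i: "i < dim_row (1\<^sub>m (2*n+1) :: int mat)" and j: "j < dim_col (1\<^sub>m (2*n+1) :: int mat)"
  then have i': "i < 2*n+1" and j': "j < 2*n+1" by auto
  have "(int j + c) mod int (2*n+1) = int j mod int (2*n+1)"
    using c by (metis add.right_neutral mod_add_right_eq)
  also have "\<dots> = int j" using j' by (intro mod_pos_pos_trivial) auto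
  finally have "(int i = (1 * int j + c) mod int (2*n+1)) = (i = j)" by auto
  then show "SP n 1 c e $$ (i, j) = 1\<^sub>m (2*n+1) $$ (i, j)"
    using i' j' e[OF j'] by (simp add: SP_index)
qed auto

lemma SP_eq_c: assumes "SP n s c e = SP n s' c' e'" "e 0 \<noteq> 0"
  shows "c mod int (2*n+1) = c' mod int (2*n+1)"
proof -
  define i where "i = nat (c mod int (2*n+1))"
  have i: "i < 2*n+1" unfolding i_def by (rule nat_mod_lt)
  have "SP n s c e $$ (i,0) = e 0" using i by (simp add: SP_index i_def)
  then have "SP n s' c' e' $$ (i,0) \<noteq> 0" using assms by simp
  then have "int i = c' mod int (2*n+1)" using i by (simp add: SP_index split: if_splits)
  then show ?thesis unfolding i_def by simp
qed

lemma SP_eq_s: assumes "SP n s c e = SP n s' c' e'" "e 1 \<noteq> 0" "n \<ge> 1"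
  "s = 1 \<or> s = -1" "s' = 1 \<or> s' = -1" "c mod int (2*n+1) = c' mod int (2*n+1)"
  shows "s = s'"
proof -
  define i where "i = nat ((s + c) mod int (2*n+1))"
  have i: "i < 2*n+1" unfolding i_def by (rule nat_mod_lt)
  have one: "1 < 2*n+1" using assms(3) by simp
  have "SP n s c e $$ (i,1) = e 1" using i one by (simp add: SP_index i_def)
  then have "SP n s' c' e' $$ (i,1) \<noteq> 0" using assms by simp
  then have "int i = (s' + c') mod int (2*n+1)" using i one by (simp add: SP_index split: if_splits)
  then have "(s + c) mod int (2*n+1) = (s' + c') mod int (2*n+1)" unfolding i_def by simp
  also have "\<dots> = (s' + c) mod int (2*n+1)" using assms(6) by (metis mod_add_right_eq)
  finally have "int (2*n+1) dvd (s - s')" by (simp add: mod_eq_dvd_iff)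
  moreover have "int (2*n+1) \<ge> 3" using assms(3) by simp
  moreover have "\<not> int (2*n+1) dvd 2" "\<not> int (2*n+1) dvd -2"
    using calculation(2) by (auto dest!: zdvd_imp_le)
  ultimately show ?thesis using assms(4,5) by auto
qed

definition good :: "nat \<Rightarrow> int mat \<Rightarrow> bool" where
  "good n M \<longleftrightarrow> (\<exists>s c e. (s = 1 \<or> s = -1) \<and> (\<forall>j. e j = 1 \<or> e j = -1) \<and> M = SP n s c e)"

lemma good_SPI: "s = 1 \<or> s = -1 \<Longrightarrow> (\<forall>j. e j = 1 \<or> e j = -1) \<Longrightarrow> good n (SP n s c e)"
  unfolding good_def by blast

lemma sign_sq: "s = 1 \<or> s = -1 \<Longrightarrow> s * s = (1::int)" by auto

lemma SP_inv: assumes s: "s = 1 \<or> s = -1" and e: "\<forall>j. e j = 1 \<or> e j = -1"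
  shows "SP n s c e * SP n s (-s*c) (\<lambda>j. e (nat ((s * int j + -s*c) mod int (2*n+1)))) = 1\<^sub>m (2*n+1)"
proof -
  have ss: "s * s = 1" using s by auto
  have cc: "s * (- s * c) + c = 0" using ss by (simp add: algebra_simps)
  show ?thesis unfolding SP_mult ss cc
  proof (rule SP_one)
    fix k show "e (nat ((s * int k + - s * c) mod int (2 * n + 1))) *
         e (nat ((s * int k + - s * c) mod int (2 * n + 1))) = 1"
      using e by (metis mult_1 mult_minus1 minus_minus)
  qed simp
qed

lemma good_mult: assumes "good n A" "good n B" shows "good n (A * B)"
proof -
  from assms(1) obtain s1 c1 e1 where 1: "s1 = 1 \<or> s1 = -1" "\<forall>j. e1 j = 1 \<or> e1 j = -1" "A = SP n s1 c1 e1"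
    unfolding good_def by auto
  from assms(2) obtain s2 c2 e2 where 2: "s2 = 1 \<or> s2 = -1" "\<forall>j. e2 j = 1 \<or> e2 j = -1" "B = SP n s2 c2 e2"
    unfolding good_def by auto
  have "\<forall>k. e1 (nat ((s2*int k + c2) mod int (2*n+1))) * e2 k = 1 \<or> e1 (nat ((s2*int k + c2) mod int (2*n+1))) * e2 k = -1"
    using 1(2) 2(2) by (metis mult_1 mult_minus1 minus_minus mult_minus1_right)
  moreover have "s1 * s2 = 1 \<or> s1 * s2 = -1" using 1(1) 2(1) by auto
  ultimately show ?thesis unfolding 1(3) 2(3) SP_mult by (intro good_SPI)
qed

lemma Ggen_good: "M \<in> Ggen n \<Longrightarrow> good n M"
proof (induction rule: Ggen.induct)
  case gen_one
  then show ?case unfolding good_def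
    by (rule exI[of _ 1], rule exI[of _ 0], rule exI[of _ "\<lambda>_. 1"]) (simp add: SP_one)
next
  case gen_a
  then show ?case unfolding good_def mat_a_SP
    by (intro exI[of _ "-1"] exI[of _ 0] exI[of _ "\<lambda>j. if j \<le> n then 1 else -1"]) simp
next
  case gen_b
  show ?case 
  proof (cases "n = 0")
    case True
    have "mat_b n = 1\<^sub>m (2*n+1)" unfolding mat_b_def signed_perm_mat_def True
      by (rule eq_matI) auto
    then show ?thesis unfolding good_def
      by (intro exI[of _ 1] exI[of _ 0] exI[of _ "\<lambda>_. 1"]) (simp add: SP_one)
  next
    case False
    then have "mat_b n = SP n 1 (-1) (\<lambda>j. 1)" by (intro mat_b_SP) simp
    then show ?thesis by (simp add: good_SPI)
  qed
next
  case (gen_mult x y)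
  then show ?case using good_mult by blast
next
  case (gen_inv x y)
  from gen_inv.IH obtain s c e where s: "s = 1 \<or> s = -1" and e: "\<forall>j. e j = 1 \<or> e j = -1"
    and x: "x = SP n s c e" unfolding good_def by auto
  define Y where "Y = SP n s (-s*c) (\<lambda>j. e (nat ((s * int j + -s*c) mod int (2*n+1))))"
  have xY: "x * Y = 1\<^sub>m (2*n+1)" unfolding x Y_def by (rule SP_inv[OF s e])
  have Yc: "Y \<in> carrier_mat (2*n+1) (2*n+1)" unfolding Y_def by (rule SP_carrier(1))
  have xc: "x \<in> carrier_mat (2*n+1) (2*n+1)" unfolding x by (rule SP_carrier(1))
  have "y = y * (x * Y)" using \<open>y \<in> carrier_mat (2*n+1) (2*n+1)\<close> by (simp add: xY)
  also have "\<dots> = (y * x) * Y" using \<open>y \<in> carrier_mat (2*n+1) (2*n+1)\<close> xc Yc by (simp add: assoc_mult_mat)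
  also have "\<dots> = Y" using \<open>y * x = 1\<^sub>m (2*n+1)\<close> Yc by simp
  finally have yY: "y = Y" .
  show ?case unfolding yY Y_def by (rule good_SPI[OF s]) (use e in blast)
qed

definition key :: "nat \<Rightarrow> int mat \<Rightarrow> int" where
  "key n M = int (THE j. j < 2*n+1 \<and> M $$ (0,j) \<noteq> 0)"

lemma key_SP: assumes s: "s = 1 \<or> s = -1" and e: "\<forall>j. e j \<noteq> 0"
  shows "key n (SP n s c e) = (- s * c) mod int (2*n+1)"
proof -
  define j0 where "j0 = nat ((- s * c) mod int (2*n+1))"
  have j0: "j0 < 2*n+1" unfolding j0_def by (rule nat_mod_lt)
  have ij0: "int j0 = (- s * c) mod int (2*n+1)" unfolding j0_def by simp
  have ss: "s * s = 1" using s by auto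
  have iff: "SP n s c e $$ (0,j) \<noteq> 0 \<longleftrightarrow> int j = (- s * c) mod int (2*n+1)" if j: "j < 2*n+1" for j
  proof -
    have "SP n s c e $$ (0,j) \<noteq> 0 \<longleftrightarrow> (s * int j + c) mod int (2*n+1) = 0"
      using j e by (simp add: SP_index)
    also have "\<dots> \<longleftrightarrow> int (2*n+1) dvd (s * int j + c)" by (simp add: dvd_eq_mod_eq_0)
    also have "\<dots> \<longleftrightarrow> int (2*n+1) dvd (int j - (- s * c))"
    proof
      assume "int (2*n+1) dvd (s * int j + c)"
      then have "int (2*n+1) dvd s * (s * int j + c)" by simp
      moreover have "s * (s * int j + c) = int j - (- s * c)" using ss by (simp add: algebra_simps)
      ultimately show "int (2*n+1) dvd (int j - (- s * c))" by simp
    next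
      assume "int (2*n+1) dvd (int j - (- s * c))"
      then have "int (2*n+1) dvd s * (int j - (- s * c))" by simp
      moreover have "s * (int j - (- s * c)) = s * int j + c" using ss by (simp add: algebra_simps)
      ultimately show "int (2*n+1) dvd (s * int j + c)" by simp
    qed
    also have "\<dots> \<longleftrightarrow> int j mod int (2*n+1) = (- s * c) mod int (2*n+1)" by (simp add: mod_eq_dvd_iff)
    also have "int j mod int (2*n+1) = int j" using j by (intro mod_pos_pos_trivial) auto
    finally show ?thesis .
  qed
  have "(THE j. j < 2*n+1 \<and> SP n s c e $$ (0,j) \<noteq> 0) = j0"
  proof (rule the_equality)
    show "j0 < 2*n+1 \<and> SP n s c e $$ (0,j0) \<noteq> 0" using j0 iff[OF j0] ij0 by simp
  next
    fix j assume "j < 2*n+1 \<and> SP n s c e $$ (0,j) \<noteq> 0"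
    then have "int j = int j0" using iff ij0 by auto
    then show "j = j0" by simp
  qed
  then show ?thesis unfolding key_def using ij0 by simp
qed

lemma good_obtain: assumes "good n M"
  obtains s c e where "s = 1 \<or> s = -1" "\<forall>j. e j = 1 \<or> e j = -1" "\<forall>j. e j \<noteq> 0" "M = SP n s c e"
proof -
  from assms obtain s c e where "s = 1 \<or> s = -1" "\<forall>j. e j = 1 \<or> e j = -1" "M = SP n s c e"
    unfolding good_def by blast
  moreover then have "\<forall>j. e j \<noteq> 0" by (metis one_neq_zero neg_equal_0_iff_equal)
  ultimately show ?thesis using that by blast
qed

lemma Hcent_c: assumes "h \<in> Hcent n"
  obtains s c e where "s = 1 \<or> s = -1" "\<forall>j. e j = 1 \<or> e j = -1" "\<forall>j. e j \<noteq> 0" "h = SP n s c e"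
    "int (2*n+1) dvd c"
proof -
  from assms have hG: "h \<in> Ggen n" and comm: "mat_a n * h = h * mat_a n" unfolding Hcent_def by auto
  from Ggen_good[OF hG] obtain s c e where s: "s = 1 \<or> s = -1" and e: "\<forall>j. e j = 1 \<or> e j = -1"
    and e0: "\<forall>j. e j \<noteq> 0" and h: "h = SP n s c e" by (rule good_obtain)
  have "(- 1 * c + 0) mod int (2*n+1) = (s * 0 + c) mod int (2*n+1)"
    using comm unfolding h mat_a_SP SP_mult
    by (rule SP_eq_c) (use e0 in auto)
  then have "(-c) mod int (2*n+1) = c mod int (2*n+1)" by simp
  then have d: "int (2*n+1) dvd (2 * c)" by (simp add: mod_eq_dvd_iff)
  then have "int (2*n+1) dvd (2 * c) * (int n + 1)" by simp
  moreover have "(2 * c) * (int n + 1) = int (2*n+1) * c + c" by (simp add: algebra_simps)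
  ultimately have "int (2*n+1) dvd int (2*n+1) * c + c" by simp
  then have "int (2*n+1) dvd c" by (simp add: dvd_add_right_iff)
  then show ?thesis using that s e e0 h by blast
qed

lemma one_Hcent: "1\<^sub>m (2*n+1) \<in> Hcent n"
proof -
  have "1\<^sub>m (2*n+1) \<in> Ggen n" by (rule Ggen.gen_one)
  moreover have "mat_a n \<in> carrier_mat (2*n+1) (2*n+1)" by (simp add: mat_a_def signed_perm_mat_def)
  ultimately show ?thesis unfolding Hcent_def by simp
qed

lemma key_coset: assumes u: "u \<in> Ggen n" and M: "M \<in> rcoset n u" shows "key n M = key n u"
proof -
  from M obtain h where hH: "h \<in> Hcent n" and Mh: "M = h * u" unfolding rcoset_def by auto
  from Hcent_c[OF hH] obtain sh ch eh where sh: "sh = 1 \<or> sh = -1" and eh: "\<forall>j. eh j = 1 \<or> eh j = -1"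
    and eh0: "\<forall>j. eh j \<noteq> 0" and h: "h = SP n sh ch eh" and dc: "int (2*n+1) dvd ch" by blast
  from Ggen_good[OF u] obtain su cu eu where su: "su = 1 \<or> su = -1" and eu: "\<forall>j. eu j = 1 \<or> eu j = -1"
    and eu0: "\<forall>j. eu j \<noteq> 0" and uu: "u = SP n su cu eu" by (rule good_obtain)
  have "key n M = (- (sh * su) * (sh * cu + ch)) mod int (2*n+1)"
    unfolding Mh h uu SP_mult
    by (rule key_SP) (use sh su eh0 eu0 in auto)
  also have "\<dots> = (- su * cu) mod int (2*n+1)"
  proof -
    have "sh * sh = 1" using sh by auto
    then have "- (sh * su) * (sh * cu + ch) = - su * cu + (- sh * su) * ch" by (simp add: algebra_simps)
    moreover have "int (2*n+1) dvd (- sh * su) * ch" using dc by simp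
    ultimately show ?thesis by (simp add: mod_eq_dvd_iff)
  qed
  also have "\<dots> = key n u" unfolding uu by (rule key_SP[symmetric]) (use su eu0 in auto)
  finally show ?thesis .
qed

definition fR :: "nat \<Rightarrow> int mat set \<Rightarrow> int" where
  "fR n S = key n (SOME M. M \<in> S)"

lemma fR_coset: assumes u: "u \<in> Ggen n" shows "fR n (rcoset n u) = key n u"
proof -
  have "u \<in> rcoset n u" unfolding rcoset_def using one_Hcent[of n]
    Ggen_good[OF u] by (force elim!: good_obtain)
  then have "(SOME M. M \<in> rcoset n u) \<in> rcoset n u" by (rule someI)
  then show ?thesis unfolding fR_def by (rule key_coset[OF u])
qed

lemma SP_mult_ex: assumes "\<forall>j. e1 j \<noteq> 0" "\<forall>j. e2 j \<noteq> 0"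
  obtains e where "\<forall>j. e j \<noteq> 0" "SP n s1 c1 e1 * SP n s2 c2 e2 = SP n (s1*s2) (s1*c2+c1) e"
proof (rule that[of "\<lambda>k. e1 (nat ((s2*int k + c2) mod int (2*n+1))) * e2 k"])
  show "\<forall>j. e1 (nat ((s2*int j + c2) mod int (2*n+1))) * e2 j \<noteq> 0" using assms by simp
qed (rule SP_mult)

fun bpow :: "nat \<Rightarrow> nat \<Rightarrow> int mat" where
  "bpow n 0 = 1\<^sub>m (2*n+1)"
| "bpow n (Suc k) = bpow n k * mat_b n"

lemma bpow_Ggen: "bpow n k \<in> Ggen n"
  by (induction k) (auto intro: Ggen.intros)

lemma bpow_SP: assumes "n \<ge> 1" shows "bpow n k = SP n 1 (- int k) (\<lambda>_. 1)"
proof (induction k)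
  case 0
  show ?case by (simp add: SP_one)
next
  case (Suc k)
  have "bpow n (Suc k) = SP n 1 (- int k) (\<lambda>_. 1) * SP n 1 (-1) (\<lambda>_. 1)"
    using Suc mat_b_SP[OF assms] by simp
  also have "\<dots> = SP n 1 (- int (Suc k)) (\<lambda>_. 1)" unfolding SP_mult
    by (rule SP_cong) auto
  finally show ?case .
qed


theorem mainTheorem5:
  fixes n :: nat
  assumes "n \<ge> 1"
  shows "\<exists>f :: int mat set \<Rightarrow> int.
           f ` Rtilde n = R_dihedral n \<and>
           (\<forall>u \<in> Ggen n. \<forall>v \<in> Ggen n. \<forall>w \<in> Ggen n.
              v * w = 1\<^sub>m (2 * n + 1) \<longrightarrow>
              f (rcoset n (u * w * mat_a n * v)) =
                dihedral_op n (f (rcoset n u)) (f (rcoset n v)))"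
proof (intro exI[of _ "fR n"] conjI ballI impI)
  show "fR n ` Rtilde n = R_dihedral n"
  proof
    show "fR n ` Rtilde n \<subseteq> R_dihedral n"
    proof
      fix x assume "x \<in> fR n ` Rtilde n"
      then obtain u where u: "u \<in> Ggen n" and x: "x = fR n (rcoset n u)" unfolding Rtilde_def by auto
      from Ggen_good[OF u] obtain s c e where "s = 1 \<or> s = -1" "\<forall>j. e j \<noteq> 0" "u = SP n s c e"
        by (rule good_obtain)
      then have "x = (- s * c) mod int (2*n+1)" unfolding x fR_coset[OF u] using key_SP by blast
      then have "0 \<le> x \<and> x < int (2*n+1)" by simp
      then show "x \<in> R_dihedral n" unfolding R_dihedral_def by auto
    qed
  next
    show "R_dihedral n \<subseteq> fR n ` Rtilde n"
    proof
      fix x assume x: "x \<in> R_dihedral n"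
      then have x0: "0 \<le> x" "x < int (2*n+1)" unfolding R_dihedral_def by auto
      have "fR n (rcoset n (bpow n (nat x))) = key n (bpow n (nat x))" by (rule fR_coset[OF bpow_Ggen])
      also have "\<dots> = (- 1 * - int (nat x)) mod int (2*n+1)" unfolding bpow_SP[OF assms]
        by (rule key_SP) auto
      also have "\<dots> = x" using x0 by simp
      finally have "x = fR n (rcoset n (bpow n (nat x)))" by simp
      moreover have "rcoset n (bpow n (nat x)) \<in> Rtilde n" unfolding Rtilde_def using bpow_Ggen by blast
      ultimately show "x \<in> fR n ` Rtilde n" by blast
    qed
  qed
next
  fix u v w assume u: "u \<in> Ggen n" and v: "v \<in> Ggen n" and w: "w \<in> Ggen n"
    and vw: "v * w = 1\<^sub>m (2 * n + 1)"
  have uwav: "u * w * mat_a n * v \<in> Ggen n" by (rule Ggen.gen_mult[OF Ggen.gen_mult[OF Ggen.gen_mult[OF u w] Ggen.gen_a] v])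
  from Ggen_good[OF u] obtain su cu eu where su: "su = 1 \<or> su = -1" and eu: "\<forall>j. eu j \<noteq> 0"
    and uu: "u = SP n su cu eu" by (rule good_obtain)
  from Ggen_good[OF v] obtain sv cv ev where sv: "sv = 1 \<or> sv = -1" and ev: "\<forall>j. ev j \<noteq> 0"
    and vv: "v = SP n sv cv ev" by (rule good_obtain)
  from Ggen_good[OF w] obtain sw cw ew where sw: "sw = 1 \<or> sw = -1" and ew: "\<forall>j. ew j \<noteq> 0"
    and ww: "w = SP n sw cw ew" by (rule good_obtain)
  obtain e1 where e1: "\<forall>j. e1 j \<noteq> 0" and p1': "SP n sv cv ev * SP n sw cw ew = SP n (sv*sw) (sv*cw+cv) e1"
    by (rule SP_mult_ex[OF ev ew])
  have p1: "v * w = SP n (sv*sw) (sv*cw+cv) e1" unfolding vv ww by (rule p1')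
  have one: "1\<^sub>m (2*n+1) = SP n 1 0 (\<lambda>_. 1)" by (rule SP_one[symmetric]) simp_all
  have eqm: "SP n (sv*sw) (sv*cw+cv) e1 = SP n 1 0 (\<lambda>_. 1)" using vw p1 one by simp
  have cmod: "(sv*cw+cv) mod int (2*n+1) = 0 mod int (2*n+1)" by (rule SP_eq_c[OF eqm]) (use e1 in auto)
  have svsw: "sv * sw = 1" by (rule SP_eq_s[OF eqm _ assms _ _ cmod]) (use e1 sv sw in auto)
  have swv: "sw = sv" using svsw sv sw by auto
  obtain e2 where e2: "\<forall>j. e2 j \<noteq> 0" and p2': "SP n su cu eu * SP n sw cw ew = SP n (su*sw) (su*cw+cu) e2"
    by (rule SP_mult_ex[OF eu ew])
  have p2: "u * w = SP n (su*sw) (su*cw+cu) e2" unfolding uu ww by (rule p2')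
  have ea: "\<forall>j. (\<lambda>j. if j \<le> n then 1 else -1::int) j \<noteq> 0" by simp
  obtain e3 where e3: "\<forall>j. e3 j \<noteq> 0" and p3': "SP n (su*sw) (su*cw+cu) e2 * SP n (-1) 0 (\<lambda>j. if j \<le> n then 1 else -1::int)
     = SP n ((su*sw)*(-1)) ((su*sw)*0+(su*cw+cu)) e3"
    by (rule SP_mult_ex[OF e2 ea])
  have p3: "u * w * mat_a n = SP n ((su*sw)*(-1)) ((su*sw)*0+(su*cw+cu)) e3"
    unfolding p2 mat_a_SP by (rule p3')
  obtain e4 where e4: "\<forall>j. e4 j \<noteq> 0" and p4': "SP n ((su*sw)*(-1)) ((su*sw)*0+(su*cw+cu)) e3 * SP n sv cv ev =
      SP n ((su*sw)*(-1)*sv) ((su*sw)*(-1)*cv + ((su*sw)*0+(su*cw+cu))) e4"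
    by (rule SP_mult_ex[OF e3 ev])
  have p4: "u * w * mat_a n * v = SP n ((su*sw)*(-1)*sv) ((su*sw)*(-1)*cv + ((su*sw)*0+(su*cw+cu))) e4"
    unfolding p3 vv by (rule p4')
  have ssu: "su * su = 1" "sv * sv = 1" using su sv by auto
  have s4: "(su*sw)*(-1)*sv = 1 \<or> (su*sw)*(-1)*sv = -1" using su sw sv by auto
  have "fR n (rcoset n (u * w * mat_a n * v)) = key n (u * w * mat_a n * v)" by (rule fR_coset[OF uwav])
  also have "\<dots> = (- ((su*sw)*(-1)*sv) * ((su*sw)*(-1)*cv + ((su*sw)*0+(su*cw+cu)))) mod int (2*n+1)"
    unfolding p4 by (rule key_SP[OF s4 e4])
  also have "\<dots> = (2 * (- sv * cv) - (- su * cu)) mod int (2*n+1)"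
  proof -
    have "int (2*n+1) dvd (sv*cw+cv)" using cmod by (simp add: dvd_eq_mod_eq_0)
    then have "int (2*n+1) dvd sv * (sv*cw+cv)" by simp
    moreover have "(- ((su*sw)*(-1)*sv) * ((su*sw)*(-1)*cv + ((su*sw)*0+(su*cw+cu)))) - (2 * (- sv * cv) - (- su * cu))
        = sv * (sv*cw+cv)"
    proof -
      have "(- ((su*sv)*(-1)*sv) * ((su*sv)*(-1)*cv + ((su*sv)*0+(su*cw+cu)))) =
            (su*su)*(sv*sv)*(- sv * cv) + (su*su)*(sv*sv) * cw + (sv*sv) * (su * cu)"
        by (simp add: algebra_simps)
      also have "\<dots> = - sv * cv + cw + su * cu" using ssu by simp
      finally have L: "(- ((su*sv)*(-1)*sv) * ((su*sv)*(-1)*cv + ((su*sv)*0+(su*cw+cu)))) = - sv * cv + cw + su * cu" .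
      have "sv * (sv*cw+cv) = (sv*sv)*cw + sv*cv" by (simp add: algebra_simps)
      then have R: "sv * (sv*cw+cv) = cw + sv*cv" using ssu by simp
      show ?thesis unfolding swv L R by (simp add: algebra_simps)
    qed
    ultimately show ?thesis by (simp add: mod_eq_dvd_iff)
  qed
  also have "\<dots> = dihedral_op n ((- su * cu) mod int (2*n+1)) ((- sv * cv) mod int (2*n+1))"
    unfolding dihedral_op_def by (rule mod_diff_cong[OF mod_mult_right_eq[symmetric] mod_mod_trivial[symmetric]])
  also have "\<dots> = dihedral_op n (fR n (rcoset n u)) (fR n (rcoset n v))"
  proof -
    have ku: "fR n (rcoset n u) = (- su * cu) mod int (2*n+1)"
      using fR_coset[OF u] key_SP[OF su eu, of n cu] uu by simp
    have kv: "fR n (rcoset n v) = (- sv * cv) mod int (2*n+1)"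
      using fR_coset[OF v] key_SP[OF sv ev, of n cv] vv by simp
    show ?thesis unfolding ku kv ..
  qed
  finally show "fR n (rcoset n (u * w * mat_a n * v)) = dihedral_op n (fR n (rcoset n u)) (fR n (rcoset n v))" .
qed

end
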